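(* Let $T,S\in \mathcal{B}_A(\mathcal{H})$. Then \[ \omega_A(T\pm iS)\leq 2\,\omega_{\mathbb{A}}\left[\begin{pmatrix} O&T\\ iS &O \end{pmatrix}\right]. \]
   Context: $\mathcal{H}$ is a complex Hilbert space and $A\in\mathcal{B}(\mathcal{H})$ is a nonzero positive (semidefinite) operator, inducing the semi-inner product $\langle x,y\rangle_A=\langle Ax,y\rangle$ and seminorm $\|x\|_A=\|A^{1/2}x\|$. $\mathcal{B}_A(\mathcal{H})=\{T\in\mathcal{B}(\mathcal{H}):\mathcal{R}(T^*A)\subseteq\mathcal{R}(A)\}$ is the set of operators admitting an $A$-adjoint (an operator $X$ with $\langle Tx,y\rangle_A=\langle x,Xy\rangle_A$ for all $x,y$). The $A$-numerical radius is $\omega_A(T)=\sup\{|\langle Tx,x\rangle_A| : x\in\mathcal{H},\ \|x\|_A=1\}$. $\mathbb{A}=\begin{pmatrix}A&O\\O&A\end{pmatrix}$ is the positive diagonal operator on $\mathcal{H}\oplus\mathcal{H}$, and $\omega_{\mathbb{A}}$ is the corresponding $\mathbb{A}$-numerical radius on $\mathcal{H}\oplus\mathcal{H}$ (with $\langle x,y\rangle_{\mathbb{A}}=\langle x_1,y_1\rangle_A+\langle x_2,y_2\rangle_A$). Here $iS$ denotes the operator $S$ multiplied by the imaginary unit $i$, and $O$ is the zero operator. *)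

theory Defs
  imports Complex_Main
begin

text \<open>A complex Hilbert space is modelled by a carrier type 'h (an abelian group),
  a complex scalar multiplication sc and an inner product ip (linear in the first
  argument, conjugate-linear in the second), complete for the induced norm.\<close>

definition hnorm :: "('h \<Rightarrow> 'h \<Rightarrow> complex) \<Rightarrow> 'h \<Rightarrow> real" where
  "hnorm ip x = sqrt (Re (ip x x))"

definition complex_hilbert_space ::
  "(complex \<Rightarrow> 'h::ab_group_add \<Rightarrow> 'h) \<Rightarrow> ('h \<Rightarrow> 'h \<Rightarrow> complex) \<Rightarrow> bool" where
  "complex_hilbert_space sc ip \<longleftrightarrow>
     vector_space sc \<and>
     (\<forall>x y z. ip (x + y) z = ip x z + ip y z) \<and>
     (\<forall>c x y. ip (sc c x) y = c * ip x y) \<and>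
     (\<forall>x y. ip y x = cnj (ip x y)) \<and>
     (\<forall>x. Im (ip x x) = 0 \<and> Re (ip x x) \<ge> 0) \<and>
     (\<forall>x. ip x x = 0 \<longrightarrow> x = 0) \<and>
     (\<forall>f :: nat \<Rightarrow> 'h.
        (\<forall>e>0. \<exists>N. \<forall>m\<ge>N. \<forall>n\<ge>N. hnorm ip (f m - f n) < e) \<longrightarrow>
        (\<exists>l. (\<lambda>n. hnorm ip (f n - l)) \<longlonglongrightarrow> 0))"

definition bounded_op ::
  "(complex \<Rightarrow> 'h::ab_group_add \<Rightarrow> 'h) \<Rightarrow> ('h \<Rightarrow> 'h \<Rightarrow> complex) \<Rightarrow> ('h \<Rightarrow> 'h) \<Rightarrow> bool" where
  "bounded_op sc ip T \<longleftrightarrow> Vector_Spaces.linear sc sc T \<and> (\<exists>K. \<forall>x. hnorm ip (T x) \<le> K * hnorm ip x)"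

definition hadj :: "('h \<Rightarrow> 'h \<Rightarrow> complex) \<Rightarrow> ('h \<Rightarrow> 'h) \<Rightarrow> 'h \<Rightarrow> 'h" where
  "hadj ip T = (\<lambda>y. THE z. \<forall>x. ip (T x) y = ip x z)"

definition positive_op ::
  "(complex \<Rightarrow> 'h::ab_group_add \<Rightarrow> 'h) \<Rightarrow> ('h \<Rightarrow> 'h \<Rightarrow> complex) \<Rightarrow> ('h \<Rightarrow> 'h) \<Rightarrow> bool" where
  "positive_op sc ip A \<longleftrightarrow> bounded_op sc ip A \<and>
     (\<forall>x. Im (ip (A x) x) = 0 \<and> Re (ip (A x) x) \<ge> 0)"

definition BA ::
  "(complex \<Rightarrow> 'h::ab_group_add \<Rightarrow> 'h) \<Rightarrow> ('h \<Rightarrow> 'h \<Rightarrow> complex) \<Rightarrow> ('h \<Rightarrow> 'h) \<Rightarrow> ('h \<Rightarrow> 'h) set" where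
  "BA sc ip A = {T. bounded_op sc ip T \<and> range (hadj ip T \<circ> A) \<subseteq> range A}"

definition ipA :: "('h \<Rightarrow> 'h \<Rightarrow> complex) \<Rightarrow> ('h \<Rightarrow> 'h) \<Rightarrow> 'h \<Rightarrow> 'h \<Rightarrow> complex" where
  "ipA ip A x y = ip (A x) y"

definition normA :: "('h \<Rightarrow> 'h \<Rightarrow> complex) \<Rightarrow> ('h \<Rightarrow> 'h) \<Rightarrow> 'h \<Rightarrow> real" where
  "normA ip A x = sqrt (Re (ipA ip A x x))"

definition omegaA :: "('h \<Rightarrow> 'h \<Rightarrow> complex) \<Rightarrow> ('h \<Rightarrow> 'h) \<Rightarrow> ('h \<Rightarrow> 'h) \<Rightarrow> real" where
  "omegaA ip A T = (SUP x\<in>{x. normA ip A x = 1}. cmod (ipA ip A (T x) x))"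

text \<open>The semi-inner product on H \<oplus> H induced by the diagonal operator diag(A,A):
  <x,y>_AA = <x1,y1>_A + <x2,y2>_A.\<close>
definition ipAA :: "('h \<Rightarrow> 'h \<Rightarrow> complex) \<Rightarrow> ('h \<Rightarrow> 'h) \<Rightarrow> 'h \<times> 'h \<Rightarrow> 'h \<times> 'h \<Rightarrow> complex" where
  "ipAA ip A x y = ipA ip A (fst x) (fst y) + ipA ip A (snd x) (snd y)"

definition normAA :: "('h \<Rightarrow> 'h \<Rightarrow> complex) \<Rightarrow> ('h \<Rightarrow> 'h) \<Rightarrow> 'h \<times> 'h \<Rightarrow> real" where
  "normAA ip A x = sqrt (Re (ipAA ip A x x))"

definition omegaAA ::
  "('h \<Rightarrow> 'h \<Rightarrow> complex) \<Rightarrow> ('h \<Rightarrow> 'h) \<Rightarrow> ('h \<times> 'h \<Rightarrow> 'h \<times> 'h) \<Rightarrow> real" where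
  "omegaAA ip A M = (SUP x\<in>{x. normAA ip A x = 1}. cmod (ipAA ip A (M x) x))"

text \<open>The operator matrix [[P, Q], [R, U]] acting on H \<oplus> H.\<close>
definition opmat :: "('h \<Rightarrow> 'h::ab_group_add) \<Rightarrow> ('h \<Rightarrow> 'h) \<Rightarrow> ('h \<Rightarrow> 'h) \<Rightarrow> ('h \<Rightarrow> 'h)
    \<Rightarrow> 'h \<times> 'h \<Rightarrow> 'h \<times> 'h" where
  "opmat P Q R U = (\<lambda>x. (P (fst x) + Q (snd x), R (fst x) + U (snd x)))"

end

theory Submission
  imports Defs "HOL-Analysis.Analysis"
begin

locale sesq =
  fixes sc :: "complex \<Rightarrow> 'h::ab_group_add \<Rightarrow> 'h" and B :: "'h \<Rightarrow> 'h \<Rightarrow> complex"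
  assumes addL: "B (x + y) z = B x z + B y z"
    and scL: "B (sc c x) y = c * B x y"
    and herm: "B y x = cnj (B x y)"
begin

lemma zeroL[simp]: "B 0 z = 0"
  using addL[of 0 0 z] by simp
lemma minusL: "B (- x) z = - B x z"
proof -
  have "B x z + B (-x) z = 0" using addL[of x "-x" z] by simp
  thus ?thesis by (simp add: add_eq_0_iff2 add.commute)
qed
lemma diffL: "B (x - y) z = B x z - B y z"
  using addL[of x "-y" z] minusL[of y z] by simp
lemma addR: "B z (x + y) = B z x + B z y"
  by (metis addL complex_cnj_add herm)
lemma scR: "B x (sc c y) = cnj c * B x y"
  by (metis complex_cnj_mult herm scL)
lemma zeroR[simp]: "B z 0 = 0"
  by (metis complex_cnj_zero herm zeroL)
lemma minusR: "B z (- x) = - B z x"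
  by (metis complex_cnj_minus herm minusL)
lemma diffR: "B z (x - y) = B z x - B z y"
  by (metis complex_cnj_diff herm diffL)
lemma diag_real: "B x x = complex_of_real (Re (B x x))"
proof -
  have "B x x = cnj (B x x)" by (rule herm)
  hence "Im (B x x) = - Im (B x x)" by (metis cnj.sel(2))
  hence "Im (B x x) = 0" by simp
  thus ?thesis by (simp add: complex_eq_iff)
qed
lemma diag_Im: "Im (B x x) = 0"
  by (metis Im_complex_of_real diag_real)

lemma expand: "B (x - sc t y) (x - sc t y) = B x x - 2 * complex_of_real (Re (cnj t * B x y)) + t * cnj t * B y y"
proof -
  have "B (x - sc t y) (x - sc t y) = B x x - cnj t * B x y - t * B y x + t * cnj t * B y y"
    by (simp add: diffL diffR scL scR algebra_simps)
  also have "B y x = cnj (B x y)" by (rule herm)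
  finally show ?thesis
    by (simp add: complex_eq_iff algebra_simps)
qed

end

locale psesq = sesq +
  assumes pos: "Re (B x x) \<ge> 0"
begin

lemma cs_sq: "(cmod (B x y))^2 \<le> Re (B x x) * Re (B y y)"
proof -
  define a where "a = (cmod (B x y))^2"
  define P where "P = Re (B x x)"
  define Q where "Q = Re (B y y)"
  have key: "P - 2 * r * a + r^2 * a * Q \<ge> 0" for r :: real
  proof -
    let ?t = "complex_of_real r * B x y"
    have p0: "Re (B (x - sc ?t y) (x - sc ?t y)) \<ge> 0" by (rule pos)
    have aa: "a = Re (B x y)^2 + Im (B x y)^2" by (simp add: a_def cmod_power2)
    have p1: "Re (cnj ?t * B x y) = r * a"
      by (simp add: aa power2_eq_square algebra_simps)
    have p2: "Re (?t * cnj ?t * B y y) = r^2 * a * Q"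
    proof -
      have "?t * cnj ?t = complex_of_real (r^2 * a)"
        by (simp add: aa complex_eq_iff power2_eq_square algebra_simps)
      moreover have "B y y = complex_of_real Q" using diag_real Q_def by simp
      ultimately show ?thesis by simp
    qed
    have "Re (B (x - sc ?t y) (x - sc ?t y)) = P - 2 * r * a + r^2 * a * Q"
      unfolding expand using p1 p2 by (simp add: P_def)
    thus ?thesis using p0 by simp
  qed
  have a0: "a \<ge> 0" "P \<ge> 0" "Q \<ge> 0" using pos a_def P_def Q_def by auto
  show ?thesis
  proof (cases "Q > 0")
    case True
    have "P - 2 * (1/Q) * a + (1/Q)^2 * a * Q \<ge> 0" by (rule key)
    hence "P - a / Q \<ge> 0" using True by (simp add: power2_eq_square field_simps)
    hence "a \<le> P * Q" using True by (simp add: field_simps)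
    thus ?thesis by (simp add: a_def P_def Q_def)
  next
    case False
    hence Q0: "Q = 0" using a0 by simp
    have "a = 0"
    proof (rule ccontr)
      assume "a \<noteq> 0"
      hence ap: "a > 0" using a0 by simp
      have "P - 2 * ((P+1)/(2*a)) * a + ((P+1)/(2*a))^2 * a * Q \<ge> 0" by (rule key)
      thus False using Q0 ap by (simp add: field_simps)
    qed
    thus ?thesis using a0 by (simp add: a_def P_def Q_def)
  qed
qed

lemma cs: "cmod (B x y) \<le> sqrt (Re (B x x)) * sqrt (Re (B y y))"
  by (metis cs_sq norm_ge_zero real_le_rsqrt real_sqrt_mult)

end

lemma eps_le: fixes a b c :: real assumes H: "\<And>e. e > 0 \<Longrightarrow> a \<le> b + e * c" shows "a \<le> b"
proof (rule ccontr)
  assume "\<not> a \<le> b"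
  hence ab: "a - b > 0" by simp
  define e where "e = (a - b) / (2 * (\<bar>c\<bar> + 1))"
  have e0: "e > 0" using ab by (simp add: e_def)
  have c1: "\<bar>c\<bar> + 1 > 0" by simp
  have "e * c \<le> e * (\<bar>c\<bar> + 1)" using e0 by (intro mult_left_mono) auto
  also have "e * (\<bar>c\<bar> + 1) = (a - b) / 2" unfolding e_def using c1 by (simp add: field_simps)
  finally have "a \<le> b + (a - b) / 2" using H[OF e0] by linarith
  thus False using ab by (simp add: field_simps)
qed

locale hs =
  fixes sc :: "complex \<Rightarrow> 'h::ab_group_add \<Rightarrow> 'h" and ip :: "'h \<Rightarrow> 'h \<Rightarrow> complex"
  assumes hs_ax: "complex_hilbert_space sc ip"
begin
lemmas hsu = hs_ax[unfolded complex_hilbert_space_def]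
lemmas vs = hsu[THEN conjunct1]
lemmas ax1 = hsu[THEN conjunct2, THEN conjunct1]
lemmas ax2 = hsu[THEN conjunct2, THEN conjunct2, THEN conjunct1]
lemmas ax3 = hsu[THEN conjunct2, THEN conjunct2, THEN conjunct2, THEN conjunct1]
lemmas ax4 = hsu[THEN conjunct2, THEN conjunct2, THEN conjunct2, THEN conjunct2, THEN conjunct1]
lemmas ax5 = hsu[THEN conjunct2, THEN conjunct2, THEN conjunct2, THEN conjunct2, THEN conjunct2, THEN conjunct1]
lemmas ax6 = hsu[THEN conjunct2, THEN conjunct2, THEN conjunct2, THEN conjunct2, THEN conjunct2, THEN conjunct2]
sublocale psesq sc ip
proof
  show "ip (x + y) z = ip x z + ip y z" for x y z using ax1 by blast
  show "ip (sc c x) y = c * ip x y" for c x y using ax2 by blast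
  show "ip y x = cnj (ip x y)" for x y using ax3 by blast
  show "0 \<le> Re (ip x x)" for x using ax4 by blast
qed
lemma md: "module sc" using vs by (simp add: module_iff_vector_space)
lemmas sc_add_r = module.scale_right_distrib[OF md]
lemmas sc_add_l = module.scale_left_distrib[OF md]
lemmas sc_sc[simp] = module.scale_scale[OF md]
lemmas sc_one[simp] = module.scale_one[OF md]
lemmas sc_zero_l[simp] = module.scale_zero_left[OF md]
lemmas sc_zero_r[simp] = module.scale_zero_right[OF md]
lemmas sc_minus_l[simp] = module.scale_minus_left[OF md]
lemmas sc_minus_r[simp] = module.scale_minus_right[OF md]
lemmas sc_diff_l = module.scale_left_diff_distrib[OF md]
lemmas sc_diff_r = module.scale_right_diff_distrib[OF md]

lemma ip_def0: "ip x x = 0 \<Longrightarrow> x = 0"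
  by (rule ax5[rule_format])

lemma complete: assumes C: "\<forall>e>0. \<exists>N. \<forall>m\<ge>N. \<forall>n\<ge>N. hnorm ip (f m - f n) < e" shows
        "\<exists>l. (\<lambda>n. hnorm ip (f n - l)) \<longlonglongrightarrow> 0"
proof -
  have "(\<forall>e>0. \<exists>N. \<forall>m\<ge>N. \<forall>n\<ge>N. hnorm ip (f m - f n) < e) \<longrightarrow> (\<exists>l. (\<lambda>n. hnorm ip (f n - l)) \<longlonglongrightarrow> 0)"
    using ax6 by (rule spec)
  thus ?thesis using C by (rule mp)
qed

abbreviation N where "N \<equiv> hnorm ip"
abbreviation Qn where "Qn x \<equiv> Re (ip x x)"

lemma N_ge0[simp]: "N x \<ge> 0" using pos by (simp add: hnorm_def)
lemma N_sq: "(N x)^2 = Qn x" using pos by (simp add: hnorm_def)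
lemma ip_self: "ip x x = complex_of_real ((N x)^2)" using N_sq diag_real by simp
lemma N_eq0[simp]: "N x = 0 \<longleftrightarrow> x = 0"
proof
  assume "N x = 0"
  hence "ip x x = 0" using ip_self by simp
  thus "x = 0" by (rule ip_def0)
qed (simp add: hnorm_def)
lemma N_zero[simp]: "N 0 = 0" by simp

lemma cs_ip: "cmod (ip x y) \<le> N x * N y"
  using cs by (simp add: hnorm_def)

lemma N_sc: "N (sc c x) = cmod c * N x"
proof -
  have "Qn (sc c x) = (cmod c)^2 * Qn x"
  proof -
    have "ip (sc c x) (sc c x) = (c * cnj c) * ip x x" by (simp add: scL scR)
    also have "c * cnj c = complex_of_real ((cmod c)^2)" by (rule complex_norm_square[symmetric])
    also have "ip x x = complex_of_real (Qn x)" by (rule diag_real)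
    finally have "ip (sc c x) (sc c x) = complex_of_real ((cmod c)^2 * Qn x)" by simp
    thus ?thesis by simp
  qed
  thus ?thesis by (simp add: hnorm_def real_sqrt_mult)
qed

lemma Qn_add: "Qn (x + y) = Qn x + 2 * Re (ip x y) + Qn y"
proof -
  have "ip (x + y) (x + y) = ip x x + ip x y + ip y x + ip y y" by (simp add: addL addR)
  moreover have "Re (ip y x) = Re (ip x y)" using herm[of x y] by simp
  ultimately show ?thesis by simp
qed

lemma Qn_diff: "Qn (x - y) = Qn x - 2 * Re (ip x y) + Qn y"
proof -
  have "ip (x - y) (x - y) = ip x x - ip x y - ip y x + ip y y" by (simp add: diffL diffR)
  moreover have "Re (ip y x) = Re (ip x y)" using herm[of x y] by simp
  ultimately show ?thesis by simp
qed

lemma N_tri: "N (x + y) \<le> N x + N y"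
proof -
  have "Re (ip x y) \<le> N x * N y" using cs_ip[of x y] complex_Re_le_cmod[of "ip x y"] by linarith
  moreover have "(N (x + y))^2 = (N x)^2 + 2 * Re (ip x y) + (N y)^2" by (simp add: N_sq Qn_add)
  ultimately have "(N (x + y))^2 \<le> (N x + N y)^2" by (simp add: power2_sum)
  thus ?thesis by (rule power2_le_imp_le) simp
qed

lemma N_minus: "N (- x) = N x"
proof -
  have "ip (-x) (-x) = ip x x" by (simp add: minusL minusR)
  thus ?thesis by (simp add: hnorm_def)
qed

lemma N_commute: "N (x - y) = N (y - x)"
  using N_minus[of "x - y"] by simp

lemma N_tri_diff: "N (x - z) \<le> N (x - y) + N (y - z)"
  using N_tri[of "x - y" "y - z"] by simp

lemma parallelogram: "Qn (x + y) + Qn (x - y) = 2 * Qn x + 2 * Qn y"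
  by (simp add: Qn_add Qn_diff)

definition closed_sub :: "'h set \<Rightarrow> bool" where
  "closed_sub M \<longleftrightarrow> 0 \<in> M \<and> (\<forall>x\<in>M. \<forall>y\<in>M. x + y \<in> M) \<and> (\<forall>c. \<forall>x\<in>M. sc c x \<in> M) \<and>
     (\<forall>x. (\<forall>e>0. \<exists>m\<in>M. N (x - m) < e) \<longrightarrow> x \<in> M)"

lemma orth_from_min:
  assumes "\<And>r. r > 0 \<Longrightarrow> Qn w \<le> Qn (w - sc (complex_of_real r * ip w m) m)"
  shows "ip w m = 0"
proof -
  define a where "a = (cmod (ip w m))^2"
  have aa: "a = Re (ip w m)^2 + Im (ip w m)^2" by (simp add: a_def cmod_power2)
  have "0 \<le> - 2 * r * a + r^2 * a * Qn m" if r: "r > 0" for r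
  proof -
    let ?t = "complex_of_real r * ip w m"
    have p1: "Re (cnj ?t * ip w m) = r * a"
      by (simp add: aa power2_eq_square algebra_simps)
    have "?t * cnj ?t = complex_of_real (r^2 * a)"
      by (simp add: aa complex_eq_iff power2_eq_square algebra_simps)
    moreover have "ip m m = complex_of_real (Qn m)" using diag_real by simp
    ultimately have p2: "Re (?t * cnj ?t * ip m m) = r^2 * a * Qn m" by (metis Re_complex_of_real of_real_mult)
    have "Qn (w - sc ?t m) = Qn w - 2 * r * a + r^2 * a * Qn m"
      unfolding expand using p1 p2 by simp
    thus ?thesis using assms[OF r] by simp
  qed
  from this[of "1 / (Qn m + 1)"] have "0 \<le> a * (- 2 * (1 / (Qn m + 1)) + (1 / (Qn m + 1))^2 * Qn m)"
    using pos[of m] by (simp add: algebra_simps)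
  moreover have "- 2 * (1 / (Qn m + 1)) + (1 / (Qn m + 1))^2 * Qn m < 0"
  proof -
    have q: "Qn m \<ge> 0" by (rule pos)
    define s where "s = 1 / (Qn m + 1)"
    have s0: "s > 0" using q by (simp add: s_def)
    have e1: "(1 / (Qn m + 1))^2 * Qn m = s * (Qn m / (Qn m + 1))" by (simp add: s_def power2_eq_square)
    have "Qn m / (Qn m + 1) < 1" using q by simp
    hence "s * (Qn m / (Qn m + 1)) < s * 1" using s0 by (rule mult_strict_left_mono)
    thus ?thesis using e1 s0 unfolding s_def[symmetric] by linarith
  qed
  moreover have "a \<ge> 0" by (simp add: a_def)
  ultimately have "a = 0" by (auto simp: zero_le_mult_iff)
  thus ?thesis by (simp add: a_def)
qed

end

context hs begin

lemma two_half: "sc 2 (x - sc (1/2) (a + b)) = (x - a) + (x - b)"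
proof -
  have "sc 2 (x - sc (1/2) (a + b)) = sc 2 x - sc (2 * (1/2)) (a + b)"
    by (simp add: sc_diff_r)
  also have "sc 2 x = x + x" using sc_add_l[of 1 1 x] by simp
  finally show ?thesis by (simp add: algebra_simps)
qed

lemma proj:
  assumes M: "closed_sub M"
  shows "\<exists>p\<in>M. \<forall>m\<in>M. ip (x - p) m = 0"
proof -
  have M0: "0 \<in> M" and Madd: "\<And>a b. a \<in> M \<Longrightarrow> b \<in> M \<Longrightarrow> a + b \<in> M"
    and Msc: "\<And>c a. a \<in> M \<Longrightarrow> sc c a \<in> M"
    and Mcl: "\<And>y. (\<And>e. e > 0 \<Longrightarrow> \<exists>m\<in>M. N (y - m) < e) \<Longrightarrow> y \<in> M"
    using M unfolding closed_sub_def by blast+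
  define D where "D = (\<lambda>m. N (x - m)) ` M"
  define d where "d = Inf D"
  have Dne: "D \<noteq> {}" using M0 D_def by blast
  have Dbdd: "bdd_below D" unfolding D_def by (rule bdd_belowI[of _ 0]) auto
  have dle: "d \<le> N (x - m)" if "m \<in> M" for m
    unfolding d_def D_def using Dbdd that D_def by (auto intro!: cInf_lower)
  have d0: "d \<ge> 0" using dle[OF M0] M0
    by (metis Dbdd Dne D_def N_ge0 cInf_greatest d_def imageE)
  have "\<exists>m\<in>M. N (x - m) < d + 1 / real (Suc n)" for n
  proof -
    have "Inf D < d + 1 / real (Suc n)" unfolding d_def by simp
    from cInf_lessD[OF Dne this] show ?thesis unfolding D_def by blast
  qed
  then obtain mm where mm: "\<And>n. mm n \<in> M" "\<And>n. N (x - mm n) < d + 1 / real (Suc n)"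
    by metis
  have Qbd: "Qn (mm j - mm k) \<le> 2 * (d + 1 / real (Suc j))^2 + 2 * (d + 1 / real (Suc k))^2 - 4 * d^2" for j k
  proof -
    let ?u = "x - mm j" and ?v = "x - mm k"
    have mid: "sc (1/2) (mm j + mm k) \<in> M" using mm Madd Msc by blast
    have "Qn (?u + ?v) = (N (sc 2 (x - sc (1/2) (mm j + mm k))))^2"
      using two_half N_sq by simp
    also have "\<dots> = 4 * (N (x - sc (1/2) (mm j + mm k)))^2" by (simp add: N_sc power2_eq_square)
    finally have "Qn (?u + ?v) \<ge> 4 * d^2" using dle[OF mid] d0
      by (simp add: power_mono)
    moreover have "Qn (?u - ?v) = Qn (mm j - mm k)"
    proof -
      have "?u - ?v = mm k - mm j" by simp
      moreover have "Qn (mm k - mm j) = Qn (mm j - mm k)"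
        using N_commute[of "mm k" "mm j"] N_sq[of "mm k - mm j"] N_sq[of "mm j - mm k"] by simp
      ultimately show ?thesis by simp
    qed
    moreover have "Qn ?u \<le> (d + 1 / real (Suc j))^2"
      using mm(2)[of j] N_sq[of ?u] N_ge0[of ?u] by (metis less_imp_le power_mono)
    moreover have "Qn ?v \<le> (d + 1 / real (Suc k))^2"
      using mm(2)[of k] N_sq[of ?v] N_ge0[of ?v] by (metis less_imp_le power_mono)
    ultimately show ?thesis using parallelogram[of ?u ?v] by linarith
  qed
  have cauchy: "\<forall>e>0. \<exists>n0. \<forall>j\<ge>n0. \<forall>k\<ge>n0. N (mm j - mm k) < e"
  proof (intro allI impI)
    fix e :: real assume e: "e > 0"
    define \<delta> where "\<delta> = min 1 (e^2 / (8 * (2 * d + 1)))"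
    have \<delta>0: "\<delta> > 0" using e d0 by (simp add: \<delta>_def)
    obtain n0 where n0: "1 / real (Suc n0) < \<delta>" using \<delta>0
      by (metis nat_approx_posE)
    show "\<exists>n0. \<forall>j\<ge>n0. \<forall>k\<ge>n0. N (mm j - mm k) < e"
    proof (intro exI allI impI)
      fix j k assume j: "j \<ge> n0" and k: "k \<ge> n0"
      have "1 / real (Suc j) \<le> 1 / real (Suc n0)" using j by (intro divide_left_mono) auto
      hence ej: "1 / real (Suc j) < \<delta>" using n0 by linarith
      have "1 / real (Suc k) \<le> 1 / real (Suc n0)" using k by (intro divide_left_mono) auto
      hence ek: "1 / real (Suc k) < \<delta>" using n0 by linarith
      have gen: "2 * (d + a)^2 - 2 * d^2 \<le> 2 * \<delta> * (2 * d + 1)" if "0 \<le> a" "a < \<delta>" for a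
      proof -
        have "\<delta> \<le> 1" by (simp add: \<delta>_def)
        have "2 * (d + a)^2 - 2 * d^2 = 2 * a * (2 * d + a)" by (simp add: power2_eq_square algebra_simps)
        also have "\<dots> \<le> 2 * \<delta> * (2 * d + 1)"
          using that \<open>\<delta> \<le> 1\<close> d0 by (intro mult_mono) auto
        finally show ?thesis .
      qed
      have "Qn (mm j - mm k) \<le> 4 * \<delta> * (2 * d + 1)"
        using Qbd[of j k] gen[OF _ ej] gen[OF _ ek] by simp
      also have "\<dots> < e^2"
      proof -
        have "\<delta> \<le> e^2 / (8 * (2 * d + 1))" by (simp add: \<delta>_def)
        hence "4 * \<delta> * (2 * d + 1) \<le> e^2 / 2" using d0 by (simp add: field_simps)
        moreover have "e^2 > 0" using e by simp
        ultimately show ?thesis by linarith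
      qed
      finally have "(N (mm j - mm k))^2 < e^2" using N_sq by simp
      thus "N (mm j - mm k) < e" using e by (simp add: power_less_imp_less_base)
    qed
  qed
  obtain p where p: "(\<lambda>n. N (mm n - p)) \<longlonglongrightarrow> 0"
    using complete[OF cauchy] by blast
  have ev: "\<exists>n0. \<forall>n\<ge>n0. N (mm n - p) < e" if "e > 0" for e
  proof -
    from p that have "eventually (\<lambda>n. dist (N (mm n - p)) 0 < e) sequentially"
      by (simp add: tendsto_iff)
    thus ?thesis by (simp add: eventually_sequentially)
  qed
  have pM: "p \<in> M"
  proof (rule Mcl)
    fix e :: real assume "e > 0"
    then obtain n0 where "\<forall>n\<ge>n0. N (mm n - p) < e" using ev by blast
    hence "N (p - mm n0) < e" using N_commute[of p "mm n0"] by simp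
    thus "\<exists>m\<in>M. N (p - m) < e" using mm(1)[of n0] by blast
  qed
  have Nxp: "N (x - p) \<le> d"
  proof (rule ccontr)
    assume "\<not> N (x - p) \<le> d"
    hence e: "N (x - p) - d > 0" by simp
    define e where "e = N (x - p) - d"
    obtain n0 where n0: "\<forall>n\<ge>n0. N (mm n - p) < e / 2" using ev e e_def by (metis half_gt_zero)
    obtain n1 where n1: "1 / real (Suc n1) < e / 2" using e e_def
      by (metis half_gt_zero nat_approx_posE)
    define n where "n = max n0 n1"
    have "1 / real (Suc n) \<le> 1 / real (Suc n1)" unfolding n_def
      by (simp add: frac_le)
    hence "N (x - mm n) < d + e / 2" using mm(2)[of n] n1 by linarith
    moreover have "N (mm n - p) < e / 2" using n0 n_def by simp
    ultimately have "N (x - p) < d + e" using N_tri_diff[of x p "mm n"] by linarith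
    thus False unfolding e_def by simp
  qed
  have "ip (x - p) m = 0" if m: "m \<in> M" for m
  proof (rule orth_from_min)
    fix r :: real assume "r > 0"
    let ?t = "complex_of_real r * ip (x - p) m"
    have "p + sc ?t m \<in> M" using pM m Madd Msc by blast
    hence "d \<le> N (x - (p + sc ?t m))" by (rule dle)
    hence "N (x - p) \<le> N (x - p - sc ?t m)" using Nxp by (simp add: diff_diff_eq)
    thus "Qn (x - p) \<le> Qn (x - p - sc ?t m)" using N_sq N_ge0 by (metis power_mono)
  qed
  thus ?thesis using pM by blast
qed

lemma ip_unique: assumes "\<And>x. ip x z1 = ip x z2" shows "z1 = z2"
proof -
  have "ip (z1 - z2) (z1 - z2) = 0" using assms[of "z1 - z2"] by (simp add: diffR)
  thus ?thesis using ip_def0[of "z1 - z2"] by simp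
qed

lemma riesz:
  assumes add: "\<And>x y. f (x + y) = f x + f y" and scl: "\<And>c x. f (sc c x) = c * f x"
    and bd: "\<And>x. cmod (f x) \<le> K * N x"
  shows "\<exists>z. \<forall>x. f x = ip x z"
proof -
  have f0: "f 0 = 0" using add[of 0 0] by simp
  have fdiff: "f (x - y) = f x - f y" for x y using add[of "x - y" y] by simp
  define Ker where "Ker = {x. f x = 0}"
  have K: "closed_sub Ker" unfolding closed_sub_def Ker_def
  proof (intro conjI ballI allI impI)
    show "0 \<in> {x. f x = 0}" using f0 by simp
    show "x + y \<in> {x. f x = 0}" if "x \<in> {x. f x = 0}" "y \<in> {x. f x = 0}" for x y using that add by simp
    show "sc c x \<in> {x. f x = 0}" if "x \<in> {x. f x = 0}" for c x using that scl by simp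
    fix x assume H: "\<forall>e>0. \<exists>m\<in>{x. f x = 0}. N (x - m) < e"
    have "cmod (f x) \<le> 0 + e * max K 0" if e: "e > 0" for e
    proof -
      obtain m where m: "f m = 0" "N (x - m) < e" using H e by blast
      have "cmod (f x) = cmod (f (x - m))" using fdiff m by simp
      also have "\<dots> \<le> K * N (x - m)" by (rule bd)
      also have "\<dots> \<le> max K 0 * N (x - m)" by (simp add: mult_right_mono)
      also have "\<dots> \<le> max K 0 * e" using m by (simp add: mult_left_mono)
      finally show ?thesis by (simp add: mult.commute)
    qed
    hence "cmod (f x) \<le> 0" by (rule eps_le)
    thus "x \<in> {x. f x = 0}" by simp
  qed
  show ?thesis
  proof (cases "\<forall>x. f x = 0")
    case True thus ?thesis by (intro exI[of _ 0]) simp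
  next
    case False
    then obtain x0 where x0: "f x0 \<noteq> 0" by blast
    obtain p where p: "p \<in> Ker" "\<forall>m\<in>Ker. ip (x0 - p) m = 0" using proj[OF K] by blast
    define w where "w = x0 - p"
    have fw: "f w \<noteq> 0" using p(1) x0 fdiff unfolding w_def Ker_def by simp
    have w0: "w \<noteq> 0" using fw f0 by auto
    have ww: "ip w w \<noteq> 0" using w0 ip_def0 by blast
    have fx: "f x = (f w / ip w w) * ip x w" for x
    proof -
      let ?m = "x - sc (f x / f w) w"
      have "f ?m = f x - (f x / f w) * f w" by (simp only: fdiff scl)
      also have "\<dots> = 0" using fw by simp
      finally have "?m \<in> Ker" unfolding Ker_def by simp
      hence "ip (x0 - p) ?m = 0" using p(2) by blast
      hence "ip w ?m = 0" unfolding w_def .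
      hence "cnj (ip ?m w) = 0" using herm[of ?m w] by simp
      hence "ip ?m w = 0" by simp
      moreover have "ip ?m w = ip x w - (f x / f w) * ip w w" by (simp only: diffL scL)
      ultimately have eq: "ip x w = (f x / f w) * ip w w" by simp
      have "(f w / ip w w) * ip x w = (f w / ip w w) * ((f x / f w) * ip w w)" by (simp only: eq)
      also have "\<dots> = f x" using ww fw by (simp add: field_simps)
      finally show ?thesis by simp
    qed
    have "\<forall>x. f x = ip x (sc (cnj (f w / ip w w)) w)"
    proof
      fix x
      have "ip x (sc (cnj (f w / ip w w)) w) = (f w / ip w w) * ip x w" by (simp only: scR complex_cnj_cnj)
      thus "f x = ip x (sc (cnj (f w / ip w w)) w)" using fx[of x] by simp
    qed
    thus ?thesis by blast
  qed
qed

lemma bounded_opD: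
  assumes "bounded_op sc ip T"
  shows "T (x + y) = T x + T y" "T (sc c x) = sc c (T x)" "\<exists>K. \<forall>x. N (T x) \<le> K * N x"
proof -
  have "Vector_Spaces.linear sc sc T" using assms unfolding bounded_op_def by blast
  hence mh: "module_hom sc sc T" by (rule module_hom_iff_linear[THEN iffD2])
  show "T (x + y) = T x + T y" by (rule module_hom.add[OF mh])
  show "T (sc c x) = sc c (T x)" by (rule module_hom.scale[OF mh])
  show "\<exists>K. \<forall>x. N (T x) \<le> K * N x" using assms unfolding bounded_op_def by blast
qed

lemma hadj_prop:
  assumes T: "bounded_op sc ip T"
  shows "ip (T x) y = ip x (hadj ip T y)"
proof -
  obtain K where K: "\<And>x. N (T x) \<le> K * N x" using bounded_opD(3)[OF T] by blast
  define f where "f = (\<lambda>x. ip (T x) y)"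
  have f1: "f (x + z) = f x + f z" for x z unfolding f_def using bounded_opD(1)[OF T] addL by simp
  have f2: "f (sc c x) = c * f x" for c x unfolding f_def using bounded_opD(2)[OF T] scL by simp
  have f3: "cmod (f x) \<le> (K * N y) * N x" for x
  proof -
    have "cmod (f x) \<le> N (T x) * N y" unfolding f_def by (rule cs_ip)
    also have "\<dots> \<le> K * N x * N y" using K[of x] N_ge0[of y] by (rule mult_right_mono)
    finally show ?thesis by (simp add: algebra_simps)
  qed
  obtain z where z: "\<forall>x. f x = ip x z" using riesz[OF f1 f2 f3] by blast
  have ex: "\<exists>!z. \<forall>x. f x = ip x z"
  proof (rule ex1I[of _ z])
    show "\<forall>x. f x = ip x z" by (rule z)
    fix z' assume z': "\<forall>x. f x = ip x z'"
    show "z' = z"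
    proof (rule ip_unique)
      fix x show "ip x z' = ip x z" using z'[rule_format, of x] z[rule_format, of x] by simp
    qed
  qed
  have h: "hadj ip T y = (THE z. \<forall>x. f x = ip x z)" unfolding hadj_def f_def by (rule refl)
  have "\<forall>x. f x = ip x (THE z. \<forall>x. f x = ip x z)" using theI'[OF ex] .
  hence "f x = ip x (hadj ip T y)" unfolding h by blast
  thus ?thesis unfolding f_def .
qed

end

context hs begin

lemma ubp:
  assumes bd: "\<And>y. \<exists>B. \<forall>w\<in>W. cmod (ip y w) \<le> B"
  shows "\<exists>K. \<forall>w\<in>W. \<forall>y. cmod (ip y w) \<le> K * N y"
proof -
  interpret Mt: Metric_space "UNIV :: 'h set" "\<lambda>x y. N (x - y)"
  proof
    show "0 \<le> N (x - y)" for x y by simp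
    show "N (x - y) = N (y - x)" for x y by (rule N_commute)
    show "(N (x - y) = 0) = (x = y)" for x y by simp
    show "N (x - z) \<le> N (x - y) + N (y - z)" for x y z by (rule N_tri_diff)
  qed
  have mc: "Mt.mcomplete"
    unfolding Mt.mcomplete_def
  proof (intro allI impI)
    fix \<sigma> :: "nat \<Rightarrow> 'h" assume "Mt.MCauchy \<sigma>"
    hence H2: "\<forall>e>0. \<exists>n0. \<forall>n n'. n0 \<le> n \<longrightarrow> n0 \<le> n' \<longrightarrow> N (\<sigma> n - \<sigma> n') < e"
      unfolding Mt.MCauchy_def by (rule conjunct2)
    have C: "\<forall>e>0. \<exists>n0. \<forall>m\<ge>n0. \<forall>n\<ge>n0. N (\<sigma> m - \<sigma> n) < e"
    proof (intro allI impI)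
      fix e :: real assume "e > 0"
      then obtain n0 where "\<forall>n n'. n0 \<le> n \<longrightarrow> n0 \<le> n' \<longrightarrow> N (\<sigma> n - \<sigma> n') < e"
        using H2[rule_format, OF \<open>e > 0\<close>] by (elim exE) (rule that)
      thus "\<exists>n0. \<forall>m\<ge>n0. \<forall>n\<ge>n0. N (\<sigma> m - \<sigma> n) < e" by (intro exI[of _ n0]) simp
    qed
    obtain l where l: "(\<lambda>n. N (\<sigma> n - l)) \<longlonglongrightarrow> 0" using complete[OF C] by (elim exE)
    have "limitin Mt.mtopology \<sigma> l sequentially"
      unfolding Mt.limitin_metric_dist_null using l by (simp only: UNIV_I simp_thms eventually_True)
    thus "\<exists>x. limitin Mt.mtopology \<sigma> x sequentially" by blast
  qed
  define E where "E n = {y. \<forall>w\<in>W. cmod (ip y w) \<le> real n}" for n :: nat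
  have cl: "closedin Mt.mtopology (E n)" for n
    unfolding Mt.closedin_metric
  proof (intro conjI allI impI)
    show "E n \<subseteq> UNIV" by simp
    fix y assume "y \<in> UNIV - E n"
    then obtain w where w: "w \<in> W" "cmod (ip y w) > real n" unfolding E_def by force
    define r where "r = (cmod (ip y w) - real n) / (N w + 1)"
    have "N w + 1 > 0" using N_ge0[of w] by linarith
    hence r0: "r > 0" using w unfolding r_def by (intro divide_pos_pos) auto
    have "y' \<notin> E n" if y': "N (y - y') < r" for y'
    proof -
      have "cmod (ip (y - y') w) \<le> N (y - y') * N w" by (rule cs_ip)
      also have "\<dots> \<le> r * N w" using y' by (simp add: mult_right_mono)
      also have "\<dots> < cmod (ip y w) - real n"
      proof -
        have "r * N w < r * (N w + 1)" using r0 by simp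
        also have "r * (N w + 1) = cmod (ip y w) - real n" unfolding r_def using \<open>N w + 1 > 0\<close> by simp
        finally show ?thesis .
      qed
      finally have "cmod (ip (y - y') w) < cmod (ip y w) - real n" .
      moreover have "cmod (ip y w) \<le> cmod (ip (y - y') w) + cmod (ip y' w)"
      proof -
        have "ip y w = ip (y - y') w + ip y' w" by (simp add: diffL)
        hence "cmod (ip y w) = cmod (ip (y - y') w + ip y' w)" by (rule arg_cong)
        also have "\<dots> \<le> cmod (ip (y - y') w) + cmod (ip y' w)" by (rule norm_triangle_ineq)
        finally show ?thesis .
      qed
      ultimately have "cmod (ip y' w) > real n" by linarith
      thus ?thesis using w(1) unfolding E_def by force
    qed
    thus "\<exists>r>0. disjnt (E n) (Mt.mball y r)" using r0
      by (intro exI[of _ r]) (auto simp: disjnt_def)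
  qed
  have un: "\<Union> (range E) = UNIV"
  proof -
    have "y \<in> \<Union> (range E)" for y
    proof -
      obtain B where B: "\<forall>w\<in>W. cmod (ip y w) \<le> B" using bd by blast
      obtain n where n: "B \<le> real n" using real_arch_simple by blast
      have "y \<in> E n" unfolding E_def using B n by force
      thus ?thesis by blast
    qed
    thus ?thesis by blast
  qed
  have "\<exists>n. Mt.mtopology interior_of (E n) \<noteq> {}"
  proof (rule ccontr)
    assume "\<not> ?thesis"
    hence "\<And>T. T \<in> range E \<Longrightarrow> closedin Mt.mtopology T \<and> Mt.mtopology interior_of T = {}"
      using cl by blast
    hence "Mt.mtopology interior_of \<Union> (range E) = {}"
      by (intro Mt.metric_Baire_category_alt mc) auto
    moreover have "Mt.mtopology interior_of \<Union> (range E) = UNIV"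
      unfolding un using interior_of_topspace[of Mt.mtopology] by simp
    ultimately show False by simp
  qed
  then obtain n y0 where y0: "y0 \<in> Mt.mtopology interior_of (E n)" by blast
  have "openin Mt.mtopology (Mt.mtopology interior_of (E n))" by simp
  then obtain r where r: "r > 0" "Mt.mball y0 r \<subseteq> Mt.mtopology interior_of (E n)"
    using y0 unfolding Mt.openin_mtopology by blast
  hence rE: "\<And>y. N (y0 - y) < r \<Longrightarrow> y \<in> E n"
    using interior_of_subset[of Mt.mtopology "E n"] by auto
  have y0E: "y0 \<in> E n" using rE r by simp
  have small: "cmod (ip y w) \<le> 2 * real n" if w: "w \<in> W" and y: "N y < r" for y w
  proof -
    have "N (y0 - (y0 + y)) = N y" using N_minus[of y] by simp
    hence "y0 + y \<in> E n" using rE y by simp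
    hence a: "cmod (ip (y0 + y) w) \<le> real n" using w unfolding E_def by blast
    have b: "cmod (ip y0 w) \<le> real n" using y0E w unfolding E_def by blast
    have "ip y w = ip (y0 + y) w - ip y0 w" by (simp add: addL)
    hence "cmod (ip y w) = cmod (ip (y0 + y) w - ip y0 w)" by (rule arg_cong)
    also have "\<dots> \<le> cmod (ip (y0 + y) w) + cmod (ip y0 w)" by (rule norm_triangle_ineq4)
    finally have "cmod (ip y w) \<le> cmod (ip (y0 + y) w) + cmod (ip y0 w)" .
    thus ?thesis using a b by linarith
  qed
  have "cmod (ip y w) \<le> (4 * real n / r) * N y" if w: "w \<in> W" for y w
  proof (cases "y = 0")
    case True thus ?thesis by simp
  next
    case False
    hence Ny: "N y > 0" using N_ge0[of y] N_eq0[of y] by linarith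
    define c where "c = r / (2 * N y)"
    have c0: "c > 0" using Ny r by (simp add: c_def)
    have "N (sc (complex_of_real c) y) = c * N y" using c0 by (simp add: N_sc)
    also have "\<dots> = r / 2" using Ny False by (simp add: c_def)
    finally have "N (sc (complex_of_real c) y) < r" using r by simp
    hence "cmod (ip (sc (complex_of_real c) y) w) \<le> 2 * real n" by (rule small[OF w])
    hence "c * cmod (ip y w) \<le> 2 * real n" using c0 by (simp add: scL norm_mult)
    hence "cmod (ip y w) \<le> 2 * real n / c" using c0 by (simp add: field_simps)
    also have "2 * real n / c = (4 * real n / r) * N y" using r Ny by (simp add: c_def field_simps)
    finally show ?thesis .
  qed
  thus ?thesis by blast
qed

end

locale hsA = hs +
  fixes A :: "'a \<Rightarrow> 'a"
  assumes posA: "positive_op sc ip A"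
begin

lemma A_bop: "bounded_op sc ip A" using posA unfolding positive_op_def by (rule conjunct1)
lemma A_add: "A (x + y) = A x + A y" by (rule bounded_opD(1)[OF A_bop])
lemma A_sc: "A (sc c x) = sc c (A x)" by (rule bounded_opD(2)[OF A_bop])
lemma A_pos: "Im (ip (A x) x) = 0" "Re (ip (A x) x) \<ge> 0"
  using posA unfolding positive_op_def by blast+
lemma A_zero[simp]: "A 0 = 0" using A_add[of 0 0] by simp
lemma A_diff: "A (x - y) = A x - A y"
proof -
  have "A (x - y) + A y = A x" using A_add[of "x - y" y] by simp
  thus ?thesis by (simp add: eq_diff_eq)
qed

lemma A_herm: "ip (A x) y = ip x (A y)"
proof -
  define B where "B = (\<lambda>x y. ip (A x) y)"
  have Bd: "Im (B v v) = 0" for v unfolding B_def by (rule A_pos(1))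
  have e1: "B (y + x) (y + x) = B y y + B y x + B x y + B x x"
    unfolding B_def by (simp add: A_add addL addR)
  have e2: "B (y + sc \<i> x) (y + sc \<i> x) = B y y - \<i> * B y x + \<i> * B x y + B x x"
    unfolding B_def by (simp add: A_add A_sc addL addR scL scR) (simp add: algebra_simps)
  have i1: "Im (B y x + B x y) = 0" using e1 Bd[of "y + x"] Bd[of y] Bd[of x] by simp
  have i2: "Re (B x y) - Re (B y x) = 0" using e2 Bd[of "y + sc \<i> x"] Bd[of y] Bd[of x] by simp
  have "B x y = cnj (B y x)" using i1 i2 by (simp add: complex_eq_iff)
  also have "cnj (B y x) = ip x (A y)" unfolding B_def using herm[of "A y" x] by simp
  finally show ?thesis unfolding B_def .
qed

sublocale Af: psesq sc "ipA ip A"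
proof
  show "ipA ip A (x + y) z = ipA ip A x z + ipA ip A y z" for x y z
    unfolding ipA_def by (simp add: A_add addL)
  show "ipA ip A (sc c x) y = c * ipA ip A x y" for c x y
    unfolding ipA_def by (simp add: A_sc scL)
  show "ipA ip A y x = cnj (ipA ip A x y)" for x y
    unfolding ipA_def using A_herm[of y x] herm[of "A x" y] by simp
  show "0 \<le> Re (ipA ip A x x)" for x unfolding ipA_def by (rule A_pos(2))
qed

abbreviation nA where "nA \<equiv> normA ip A"
abbreviation iA where "iA \<equiv> ipA ip A"

lemma nA_ge0[simp]: "nA x \<ge> 0" unfolding normA_def using Af.pos by simp
lemma nA_sq: "(nA x)^2 = Re (iA x x)" unfolding normA_def using Af.pos by simp
lemma csA: "cmod (iA x y) \<le> nA x * nA y" unfolding normA_def by (rule Af.cs)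
lemma nA_sc: "nA (sc c x) = cmod c * nA x"
proof -
  have "iA (sc c x) (sc c x) = (c * cnj c) * iA x x" by (simp add: Af.scL Af.scR)
  also have "c * cnj c = complex_of_real ((cmod c)^2)" by (rule complex_norm_square[symmetric])
  also have "iA x x = complex_of_real (Re (iA x x))" by (rule Af.diag_real)
  finally have "iA (sc c x) (sc c x) = complex_of_real ((cmod c)^2 * Re (iA x x))" by simp
  hence "Re (iA (sc c x) (sc c x)) = (cmod c)^2 * Re (iA x x)" by simp
  thus ?thesis unfolding normA_def by (simp add: real_sqrt_mult)
qed

lemma nA_le: "\<exists>c\<ge>0. \<forall>v. nA v \<le> c * N v"
proof -
  obtain K where K: "\<And>x. N (A x) \<le> K * N x" using bounded_opD(3)[OF A_bop] by blast
  define K' where "K' = max K 0"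
  have "(nA v)^2 \<le> (sqrt K' * N v)^2" for v
  proof -
    have "(nA v)^2 = Re (ip (A v) v)" unfolding nA_sq ipA_def ..
    also have "\<dots> \<le> cmod (ip (A v) v)" by (rule complex_Re_le_cmod)
    also have "\<dots> \<le> N (A v) * N v" by (rule cs_ip)
    also have "\<dots> \<le> K' * N v * N v"
    proof -
      have "K * N v \<le> K' * N v" by (intro mult_right_mono) (simp_all add: K'_def)
      hence "N (A v) \<le> K' * N v" using K[of v] by linarith
      thus ?thesis by (rule mult_right_mono) simp
    qed
    also have "\<dots> = (sqrt K' * N v)^2" unfolding K'_def by (simp add: power2_eq_square power_mult_distrib)
    finally show ?thesis .
  qed
  hence "nA v \<le> sqrt K' * N v" for v by (rule power2_le_imp_le) (simp add: K'_def)
  thus ?thesis by (intro exI[of _ "sqrt K'"]) (simp add: K'_def)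
qed

definition RA where "RA = {w. \<forall>e>0. \<exists>u. N (w - A u) < e}"

lemma A_RA: "A u \<in> RA" unfolding RA_def by (intro CollectI allI impI exI[of _ u]) simp

lemma RA_D: "w \<in> RA \<Longrightarrow> e > 0 \<Longrightarrow> \<exists>u. N (w - A u) < e"
  unfolding RA_def by simp

lemma RA_closed: "closed_sub RA"
  unfolding closed_sub_def
proof (intro conjI ballI allI impI)
  show "0 \<in> RA" using A_RA[of 0] by simp
  fix x y assume x: "x \<in> RA" and y: "y \<in> RA"
  show "x + y \<in> RA" unfolding RA_def
  proof (intro CollectI allI impI)
    fix e :: real assume e: "e > 0"
    have e2: "e / 2 > 0" using e by simp
    obtain u1 where u1: "N (x - A u1) < e / 2" using RA_D[OF x e2] by (elim exE) (rule that)
    obtain u2 where u2: "N (y - A u2) < e / 2" using RA_D[OF y e2] by (elim exE) (rule that)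
    have "x + y - A (u1 + u2) = (x - A u1) + (y - A u2)" by (simp add: A_add)
    hence "N (x + y - A (u1 + u2)) \<le> N (x - A u1) + N (y - A u2)"
      using N_tri[of "x - A u1" "y - A u2"] by (simp only:)
    thus "\<exists>u. N (x + y - A u) < e" using u1 u2 by (intro exI[of _ "u1 + u2"]) linarith
  qed
next
  fix c x assume x: "x \<in> RA"
  show "sc c x \<in> RA" unfolding RA_def
  proof (intro CollectI allI impI)
    fix e :: real assume e: "e > 0"
    show "\<exists>u. N (sc c x - A u) < e"
    proof (cases "c = 0")
      case True thus ?thesis using e by (intro exI[of _ 0]) simp
    next
      case False
      hence cp: "cmod c > 0" by simp
      have ec: "e / cmod c > 0" using e cp by simp
      obtain u where u: "N (x - A u) < e / cmod c" using RA_D[OF x ec] by (elim exE) (rule that)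
      have "sc c x - A (sc c u) = sc c (x - A u)" by (simp add: A_sc sc_diff_r)
      hence "N (sc c x - A (sc c u)) = cmod c * N (x - A u)" by (simp add: N_sc)
      also have "\<dots> < cmod c * (e / cmod c)" using u cp by (rule mult_strict_left_mono)
      also have "\<dots> = e" using cp by simp
      finally show ?thesis by blast
    qed
  qed
next
  fix x assume H: "\<forall>e>0. \<exists>m\<in>RA. N (x - m) < e"
  show "x \<in> RA" unfolding RA_def
  proof (intro CollectI allI impI)
    fix e :: real assume e: "e > 0"
    have e2: "e / 2 > 0" using e by simp
    obtain m where m: "m \<in> RA" "N (x - m) < e / 2" using H e2 by blast
    obtain u where u: "N (m - A u) < e / 2" using RA_D[OF m(1) e2] by (elim exE) (rule that)
    have "N (x - A u) \<le> N (x - m) + N (m - A u)" by (rule N_tri_diff)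
    thus "\<exists>u. N (x - A u) < e" using m(2) u by (intro exI[of _ u]) linarith
  qed
qed

lemma perp_RA: assumes "\<And>m. m \<in> RA \<Longrightarrow> ip v m = 0" shows "A v = 0"
proof -
  have "ip (A v) (A v) = ip v (A (A v))" by (rule A_herm)
  also have "\<dots> = 0" using assms A_RA by blast
  finally show ?thesis by (rule ip_def0)
qed

lemma BA_key:
  assumes T: "T \<in> BA sc ip A"
  shows "\<exists>X. \<forall>y. X y \<in> RA \<and> (\<forall>x. iA (T x) y = iA x (X y))"
proof -
  have Tb: "bounded_op sc ip T" and rng: "range (hadj ip T \<circ> A) \<subseteq> range A"
    using T unfolding BA_def by blast+
  have "\<forall>y. \<exists>p. p \<in> RA \<and> (\<forall>x. iA (T x) y = iA x p)"
  proof
    fix y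
    have "hadj ip T (A y) \<in> range A" using rng by auto
    then obtain z where z: "hadj ip T (A y) = A z" by blast
    have k1: "iA (T x) y = iA x z" for x
    proof -
      have "iA (T x) y = ip (T x) (A y)" unfolding ipA_def by (rule A_herm)
      also have "\<dots> = ip x (hadj ip T (A y))" by (rule hadj_prop[OF Tb])
      also have "\<dots> = ip (A x) z" unfolding z by (rule A_herm[symmetric])
      finally show ?thesis unfolding ipA_def .
    qed
    obtain p where p: "p \<in> RA" "\<forall>m\<in>RA. ip (z - p) m = 0" using proj[OF RA_closed] by blast
    have "A (z - p) = 0" using p(2) by (intro perp_RA) blast
    hence Azp: "A z = A p" using A_diff by simp
    have "iA x z = iA x p" for x
    proof -
      have "iA x z = ip x (A z)" unfolding ipA_def by (rule A_herm)
      also have "\<dots> = ip x (A p)" unfolding Azp ..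
      also have "\<dots> = iA x p" unfolding ipA_def by (rule A_herm[symmetric])
      finally show ?thesis .
    qed
    thus "\<exists>p. p \<in> RA \<and> (\<forall>x. iA (T x) y = iA x p)" using p(1) k1 by auto
  qed
  thus ?thesis by (rule choice)
qed

end

lemma growth:
  fixes q D :: real
  assumes q: "q > 1" and H: "\<And>n. q ^ (2 ^ n) \<le> D"
  shows False
proof -
  obtain n where n: "D / (q - 1) < real n" using reals_Archimedean2 by blast
  have "1 + real (2 ^ n) * (q - 1) \<le> (1 + (q - 1)) ^ (2 ^ n)"
    by (rule Bernoulli_inequality) (use q in simp)
  hence b: "1 + real (2 ^ n) * (q - 1) \<le> q ^ (2 ^ n)" by simp
  have "real n \<le> real (2 ^ n)" using less_exp[of n] by linarith
  hence "real n * (q - 1) \<le> real (2 ^ n) * (q - 1)" using q by (intro mult_right_mono) auto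
  moreover have "D < real n * (q - 1)" using n q by (simp add: field_simps)
  ultimately have "D < q ^ (2 ^ n)" using b by linarith
  thus False using H[of n] by linarith
qed

lemma iter_real:
  fixes f :: "nat \<Rightarrow> real" and s :: real
  assumes s: "s \<ge> 0" and f0: "\<And>k. f k \<ge> 0" and sq: "\<And>k. (f k)^2 \<le> f (2 * k) * s"
  shows "(f 1) ^ (2 ^ n) \<le> f (2 ^ n) * s ^ (2 ^ n - 1)"
proof (induction n)
  case 0 thus ?case by simp
next
  case (Suc n)
  have p: "(2::nat) ^ n \<ge> 1" by simp
  have "(f 1) ^ (2 ^ Suc n) = ((f 1) ^ (2 ^ n))^2" by (simp add: power_mult[symmetric] mult.commute)
  also have "\<dots> \<le> (f (2 ^ n) * s ^ (2 ^ n - 1))^2"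
    using Suc.IH by (rule power_mono) (use f0 in simp)
  also have "\<dots> = (f (2 ^ n))^2 * s ^ (2 * (2 ^ n - 1))"
    by (simp add: power_mult_distrib power_mult[symmetric] mult.commute)
  also have "\<dots> \<le> (f (2 * 2 ^ n) * s) * s ^ (2 * (2 ^ n - 1))"
    using sq[of "2 ^ n"] s by (intro mult_right_mono) auto
  also have "\<dots> = f (2 ^ Suc n) * s ^ (2 ^ Suc n - 1)"
  proof -
    have "Suc (2 * (2 ^ n - 1)) = 2 * 2 ^ n - (1::nat)" using p by arith
    hence "Suc (2 * (2 ^ n - 1)) = 2 ^ Suc n - 1" by simp
    hence "s * s ^ (2 * (2 ^ n - 1)) = s ^ (2 ^ Suc n - 1)" by (metis power_Suc)
    thus ?thesis by (simp add: mult.assoc)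
  qed
  finally show ?case .
qed

lemma krein_real:
  fixes a s L c :: real
  assumes s: "s > 0" and L: "L > 0" and a: "a \<ge> 0"
    and H: "\<And>n. a ^ (2 ^ n) \<le> c * L ^ (2 ^ n) * s ^ (2 ^ n - 1)"
  shows "a \<le> L * s"
proof (rule ccontr)
  assume "\<not> a \<le> L * s"
  hence aL: "a > L * s" by simp
  define q where "q = a / (L * s)"
  have Ls: "L * s > 0" using L s by simp
  have q1: "q > 1" using aL Ls by (simp add: q_def)
  have aq: "a = q * (L * s)" using L s by (simp add: q_def)
  have "q ^ (2 ^ n) \<le> c / s" for n
  proof -
    have e: "s ^ (2 ^ n) = s * s ^ (2 ^ n - 1)"
    proof -
      have "Suc (2 ^ n - 1) = (2::nat) ^ n" by simp
      thus ?thesis by (metis power_Suc)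
    qed
    have "q ^ (2 ^ n) * (L ^ (2 ^ n) * s ^ (2 ^ n - 1)) * s = a ^ (2 ^ n)"
      unfolding aq power_mult_distrib e by (simp add: algebra_simps)
    also have "\<dots> \<le> c * (L ^ (2 ^ n) * s ^ (2 ^ n - 1))" using H[of n] by (simp add: mult.assoc)
    finally have "(q ^ (2 ^ n) * s) * (L ^ (2 ^ n) * s ^ (2 ^ n - 1)) \<le> c * (L ^ (2 ^ n) * s ^ (2 ^ n - 1))"
      by (simp add: algebra_simps)
    moreover have "L ^ (2 ^ n) * s ^ (2 ^ n - 1) > 0" using L s by simp
    ultimately have "q ^ (2 ^ n) * s \<le> c" by (rule mult_right_le_imp_le)
    thus ?thesis using s by (simp add: field_simps)
  qed
  thus False using growth[OF q1] by blast
qed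

context hsA begin

lemma cmod_ip_self: "cmod (ip v v) = (N v)^2"
proof -
  have "cmod (ip v v) = cmod (complex_of_real ((N v)^2))" by (simp only: ip_self)
  also have "\<dots> = \<bar>(N v)^2\<bar>" by (rule norm_of_real)
  finally show ?thesis by simp
qed

lemma X_bound:
  assumes Xk: "\<And>x y. iA (T x) y = iA x (X y)" and XR: "\<And>y. X y \<in> RA"
  shows "\<exists>K\<ge>0. \<forall>y. N (X y) \<le> K * N y"
proof -
  have sw: "cmod (ip y (A (T u))) = cmod (ip (A u) (X y))" for u y
  proof -
    have "ip y (A (T u)) = cnj (ip (A (T u)) y)" by (rule herm)
    also have "ip (A (T u)) y = ip (A u) (X y)" using Xk[of u y] unfolding ipA_def .
    finally show ?thesis by simp
  qed
  define W where "W = (\<lambda>u. A (T u)) ` {u. N (A u) \<le> 1}"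
  have "\<exists>B. \<forall>w\<in>W. cmod (ip y w) \<le> B" for y
  proof (intro exI[of _ "N (X y)"] ballI)
    fix w assume "w \<in> W"
    then obtain u where u: "w = A (T u)" "N (A u) \<le> 1" unfolding W_def by blast
    have "cmod (ip y w) = cmod (ip (A u) (X y))" unfolding u(1) by (rule sw)
    also have "\<dots> \<le> N (A u) * N (X y)" by (rule cs_ip)
    also have "\<dots> \<le> 1 * N (X y)" using u(2) by (intro mult_right_mono) auto
    finally show "cmod (ip y w) \<le> N (X y)" by simp
  qed
  hence "\<exists>K. \<forall>w\<in>W. \<forall>y. cmod (ip y w) \<le> K * N y" by (rule ubp)
  then obtain K0 where K0': "\<forall>w\<in>W. \<forall>y. cmod (ip y w) \<le> K0 * N y" by (elim exE) (rule that)
  have K0: "\<And>w y. w \<in> W \<Longrightarrow> cmod (ip y w) \<le> K0 * N y" using K0' by blast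
  define K where "K = max K0 0"
  have K0K: "K0 * N y \<le> K * N y" for y unfolding K_def by (intro mult_right_mono) auto
  have st1: "cmod (ip (A u) (X y)) \<le> K * N y * N (A u)" for u y
  proof (cases "A u = 0")
    case True thus ?thesis unfolding K_def by simp
  next
    case False
    define s where "s = N (A u)"
    have s0: "s > 0" using False N_ge0[of "A u"] N_eq0[of "A u"] unfolding s_def by linarith
    define u' where "u' = sc (complex_of_real (1 / s)) u"
    have Au': "A u' = sc (complex_of_real (1 / s)) (A u)" unfolding u'_def by (rule A_sc)
    have "N (A u') = 1" unfolding Au' N_sc using s0 False by (simp add: s_def norm_divide)
    hence "A (T u') \<in> W" unfolding W_def by (intro image_eqI[where x = u']) auto
    hence "cmod (ip y (A (T u'))) \<le> K0 * N y" by (rule K0)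
    hence "cmod (ip (A u') (X y)) \<le> K * N y" using sw[where u=u' and y=y] K0K[of y] by linarith
    moreover have "cmod (ip (A u') (X y)) = (1 / s) * cmod (ip (A u) (X y))"
      unfolding Au' scL using s0 by (simp add: norm_mult norm_divide)
    ultimately have "(1 / s) * cmod (ip (A u) (X y)) \<le> K * N y" by simp
    hence "cmod (ip (A u) (X y)) \<le> K * N y * s" using s0 by (simp add: field_simps)
    thus ?thesis unfolding s_def .
  qed
  have st2: "cmod (ip w (X y)) \<le> K * N y * N w" if w: "w \<in> RA" for w y
  proof (rule eps_le)
    fix e :: real assume e: "e > 0"
    obtain u where u: "N (w - A u) < e" using RA_D[OF w e] by (elim exE) (rule that)
    have "ip w (X y) = ip (w - A u) (X y) + ip (A u) (X y)" by (simp add: diffL)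
    hence "cmod (ip w (X y)) = cmod (ip (w - A u) (X y) + ip (A u) (X y))" by (rule arg_cong)
    also have "\<dots> \<le> cmod (ip (w - A u) (X y)) + cmod (ip (A u) (X y))" by (rule norm_triangle_ineq)
    also have "\<dots> \<le> N (w - A u) * N (X y) + K * N y * N (A u)"
      using cs_ip[of "w - A u" "X y"] st1[of u y] by linarith
    also have "\<dots> \<le> e * N (X y) + K * N y * (N w + e)"
    proof -
      have "N (A u) \<le> N (A u - w) + N (w - 0)" using N_tri_diff[of "A u" 0 w] by simp
      hence "N (A u) \<le> N w + e" using u N_commute[of "A u" w] by simp
      hence "K * N y * N (A u) \<le> K * N y * (N w + e)"
        by (intro mult_left_mono) (auto simp: K_def)
      moreover have "N (w - A u) * N (X y) \<le> e * N (X y)" using u by (intro mult_right_mono) auto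
      ultimately show ?thesis by linarith
    qed
    also have "\<dots> = K * N y * N w + e * (N (X y) + K * N y)" by (simp add: algebra_simps)
    finally show "cmod (ip w (X y)) \<le> K * N y * N w + e * (N (X y) + K * N y)" .
  qed
  have "N (X y) \<le> K * N y" for y
  proof (cases "N (X y) = 0")
    case True thus ?thesis unfolding K_def by simp
  next
    case False
    hence p: "N (X y) > 0" using N_ge0[of "X y"] by linarith
    have "(N (X y))^2 \<le> K * N y * N (X y)" using st2[where w="X y" and y=y, OF XR] cmod_ip_self[of "X y"] by simp
    hence "N (X y) * N (X y) \<le> (K * N y) * N (X y)" by (simp add: power2_eq_square)
    thus ?thesis using p by (rule mult_right_le_imp_le)
  qed
  thus ?thesis using K_def by (intro exI[of _ K]) simp
qed

end

context hsA begin

lemma A_bounded: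
  assumes T: "T \<in> BA sc ip A"
  shows "\<exists>C. \<forall>x. nA (T x) \<le> C * nA x"
proof -
  obtain X where X: "\<forall>y. X y \<in> RA \<and> (\<forall>x. iA (T x) y = iA x (X y))"
    using BA_key[OF T] by (elim exE) (rule that)
  have Xk: "\<And>x y. iA (T x) y = iA x (X y)" and XR: "\<And>y. X y \<in> RA" using X by blast+
  obtain K where K: "K \<ge> 0" "\<And>y. N (X y) \<le> K * N y"
    using X_bound[OF Xk XR] by blast
  have Tb: "bounded_op sc ip T" using T unfolding BA_def by blast
  obtain KT where KT: "\<And>x. N (T x) \<le> KT * N x" using bounded_opD(3)[OF Tb] by blast
  define KT' where "KT' = max KT 0"
  have KT': "N (T x) \<le> KT' * N x" for x
  proof -
    have "KT * N x \<le> KT' * N x" unfolding KT'_def by (intro mult_right_mono) auto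
    thus ?thesis using KT[of x] by linarith
  qed
  obtain cA where cA: "cA \<ge> 0" "\<And>v. nA v \<le> cA * N v" using nA_le by blast
  define R where "R = (\<lambda>x. X (T x))"
  define L where "L = K * KT' + 1"
  have "K * KT' \<ge> 0" using K(1) unfolding KT'_def by simp
  hence L0: "L > 0" unfolding L_def by linarith
  have RN: "N (R x) \<le> L * N x" for x
  proof -
    have "N (R x) \<le> K * N (T x)" unfolding R_def by (rule K(2))
    also have "\<dots> \<le> K * (KT' * N x)" using KT'[of x] K(1) by (rule mult_left_mono)
    also have "\<dots> \<le> L * N x" unfolding L_def by (simp add: algebra_simps)
    finally show ?thesis .
  qed
  have RpN: "N ((R ^^ k) x) \<le> L ^ k * N x" for k x
  proof (induction k)
    case 0 thus ?case by simp
  next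
    case (Suc k)
    have "N ((R ^^ Suc k) x) = N (R ((R ^^ k) x))" by simp
    also have "\<dots> \<le> L * N ((R ^^ k) x)" by (rule RN)
    also have "\<dots> \<le> L * (L ^ k * N x)" using Suc.IH L0 by (intro mult_left_mono) auto
    finally show ?case by (simp add: mult.assoc)
  qed
  have Rsym: "iA (R x) z = iA x (R z)" for x z
  proof -
    have a: "iA x (R z) = iA (T x) (T z)" unfolding R_def by (rule Xk[symmetric])
    have "iA (R x) z = cnj (iA z (R x))" by (rule Af.herm)
    also have "iA z (R x) = iA (T z) (T x)" unfolding R_def by (rule Xk[symmetric])
    also have "cnj (iA (T z) (T x)) = iA (T x) (T z)" by (rule Af.herm[symmetric])
    finally show ?thesis using a by simp
  qed
  have Rpsym: "iA ((R ^^ k) x) z = iA x ((R ^^ k) z)" for k x z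
  proof (induction k arbitrary: x z)
    case 0 thus ?case by simp
  next
    case (Suc k)
    have "iA ((R ^^ Suc k) x) z = iA (R ((R ^^ k) x)) z" by simp
    also have "\<dots> = iA ((R ^^ k) x) (R z)" by (rule Rsym)
    also have "\<dots> = iA x ((R ^^ k) (R z))" by (rule Suc.IH)
    also have "(R ^^ k) (R z) = (R ^^ Suc k) z" by (simp add: funpow_swap1)
    finally show ?case .
  qed
  have nARx: "nA (R x) \<le> L * nA x" for x
  proof -
    define s where "s = nA x"
    define f where "f = (\<lambda>k. nA ((R ^^ k) x))"
    have f0: "f k \<ge> 0" for k unfolding f_def by simp
    have sq: "(f k)^2 \<le> f (2 * k) * s" for k
    proof -
      have "(f k)^2 = Re (iA ((R ^^ k) x) ((R ^^ k) x))" unfolding f_def by (rule nA_sq)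
      also have "iA ((R ^^ k) x) ((R ^^ k) x) = iA ((R ^^ k) ((R ^^ k) x)) x" by (rule Rpsym[symmetric])
      also have "(R ^^ k) ((R ^^ k) x) = (R ^^ (2 * k)) x" by (simp add: funpow_add mult_2)
      also have "Re (iA ((R ^^ (2 * k)) x) x) \<le> cmod (iA ((R ^^ (2 * k)) x) x)" by (rule complex_Re_le_cmod)
      also have "\<dots> \<le> f (2 * k) * s" unfolding f_def s_def by (rule csA)
      finally show ?thesis .
    qed
    have it: "(f 1) ^ (2 ^ n) \<le> f (2 ^ n) * s ^ (2 ^ n - 1)" for n
      using iter_real[where f=f and s=s, OF _ f0 sq] by (simp add: s_def)
    show ?thesis
    proof (cases "s = 0")
      case True
      have "(f 1)^2 \<le> 0" using sq[of 1] True by simp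
      hence "f 1 = 0" using f0[of 1] by (metis le_less power2_less_0 zero_eq_power2)
      thus ?thesis unfolding f_def using L0 by simp
    next
      case False
      hence s0: "s > 0" unfolding s_def using nA_ge0[of x] by linarith
      have "f 1 \<le> L * s"
      proof (rule krein_real[OF s0 L0 f0])
        fix n :: nat
        have "f (2 ^ n) \<le> cA * N ((R ^^ (2 ^ n)) x)" unfolding f_def by (rule cA(2))
        also have "\<dots> \<le> cA * (L ^ (2 ^ n) * N x)" using RpN cA(1) by (rule mult_left_mono)
        finally have "f (2 ^ n) \<le> (cA * N x) * L ^ (2 ^ n)" by (simp add: algebra_simps)
        hence "f (2 ^ n) * s ^ (2 ^ n - 1) \<le> (cA * N x) * L ^ (2 ^ n) * s ^ (2 ^ n - 1)"
          using s0 by (intro mult_right_mono) auto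
        thus "f 1 ^ 2 ^ n \<le> cA * N x * L ^ 2 ^ n * s ^ (2 ^ n - 1)" using it[of n] by linarith
      qed
      thus ?thesis unfolding f_def s_def by simp
    qed
  qed
  have "nA (T x) \<le> sqrt L * nA x" for x
  proof -
    have "(nA (T x))^2 = Re (iA (T x) (T x))" by (rule nA_sq)
    also have "iA (T x) (T x) = iA x (R x)" unfolding R_def by (rule Xk)
    also have "Re (iA x (R x)) \<le> cmod (iA x (R x))" by (rule complex_Re_le_cmod)
    also have "\<dots> \<le> nA x * nA (R x)" by (rule csA)
    also have "\<dots> \<le> nA x * (L * nA x)" using nARx[of x] by (intro mult_left_mono) auto
    also have "\<dots> = (sqrt L * nA x)^2" using L0 by (simp add: power2_eq_square power_mult_distrib)
    finally show ?thesis by (rule power2_le_imp_le) (use L0 in simp)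
  qed
  thus ?thesis by blast
qed

end

lemma ii_mult: "\<i> * (\<i> * z) = - z"
  by (simp add: mult.assoc[symmetric])

context hsA begin

lemma exists_unit:
  assumes "\<exists>x. A x \<noteq> 0"
  shows "\<exists>x. nA x = 1"
proof -
  have "\<exists>x. nA x > 0"
  proof (rule ccontr)
    assume "\<not> ?thesis"
    hence z: "nA x = 0" for x using nA_ge0[of x] by (meson not_less order.antisym)
    have "A x = 0" for x
    proof -
      have "cmod (iA x (A x)) \<le> nA x * nA (A x)" by (rule csA)
      hence "ip (A x) (A x) = 0" using z[of x] unfolding ipA_def by simp
      thus ?thesis by (rule ip_def0)
    qed
    thus False using assms by blast
  qed
  then obtain x where x: "nA x > 0" by blast
  have "nA (sc (complex_of_real (1 / nA x)) x) = 1" unfolding nA_sc using x by (simp add: norm_divide)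
  thus ?thesis by blast
qed

lemma normAA_eq: "normAA ip A z = sqrt ((nA (fst z))^2 + (nA (snd z))^2)"
  unfolding normAA_def ipAA_def nA_sq by simp

lemma main:
  assumes ex: "\<exists>x. A x \<noteq> 0" and T: "T \<in> BA sc ip A" and S: "S \<in> BA sc ip A"
  shows "omegaA ip A (\<lambda>x. T x + sc \<i> (S x))
           \<le> 2 * omegaAA ip A (opmat (\<lambda>_. 0) T (\<lambda>x. sc \<i> (S x)) (\<lambda>_. 0)) \<and>
         omegaA ip A (\<lambda>x. T x - sc \<i> (S x))
           \<le> 2 * omegaAA ip A (opmat (\<lambda>_. 0) T (\<lambda>x. sc \<i> (S x)) (\<lambda>_. 0))"
proof -
  define M where "M = opmat (\<lambda>_. 0) T (\<lambda>x. sc \<i> (S x)) (\<lambda>_. 0)"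
  define V where "V = (\<lambda>z. cmod (ipAA ip A (M z) z))"
  define U where "U = {z. normAA ip A z = 1}"
  have Tb: "bounded_op sc ip T" using T unfolding BA_def by blast
  have Sb: "bounded_op sc ip S" using S unfolding BA_def by blast
  obtain CT0 where CT0: "\<And>x. nA (T x) \<le> CT0 * nA x" using A_bounded[OF T] by blast
  obtain CS0 where CS0: "\<And>x. nA (S x) \<le> CS0 * nA x" using A_bounded[OF S] by blast
  define CT where "CT = max CT0 0"
  define CS where "CS = max CS0 0"
  have CT: "nA (T x) \<le> CT * nA x" for x
  proof -
    have "CT0 * nA x \<le> CT * nA x" unfolding CT_def by (intro mult_right_mono) auto
    thus ?thesis using CT0[of x] by linarith
  qed
  have CS: "nA (S x) \<le> CS * nA x" for x
  proof -
    have "CS0 * nA x \<le> CS * nA x" unfolding CS_def by (intro mult_right_mono) auto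
    thus ?thesis using CS0[of x] by linarith
  qed
  have Mz: "ipAA ip A (M z) z = iA (T (snd z)) (fst z) + \<i> * iA (S (fst z)) (snd z)" for z
    unfolding M_def opmat_def ipAA_def by (simp add: Af.scL)
  have bdd: "bdd_above (V ` U)"
  proof (rule bdd_aboveI2)
    fix z assume "z \<in> U"
    hence "sqrt ((nA (fst z))^2 + (nA (snd z))^2) = 1" unfolding U_def normAA_eq by simp
    hence s1: "(nA (fst z))^2 + (nA (snd z))^2 = 1" by simp
    have "(nA (fst z))^2 \<le> 1" using s1 zero_le_power2[of "nA (snd z)"] by linarith
    hence n1: "nA (fst z) \<le> 1" using power2_le_imp_le[of "nA (fst z)" 1] by simp
    have "(nA (snd z))^2 \<le> 1" using s1 zero_le_power2[of "nA (fst z)"] by linarith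
    hence n2: "nA (snd z) \<le> 1" using power2_le_imp_le[of "nA (snd z)" 1] by simp
    have p1: "nA (snd z) * nA (fst z) \<le> 1" using n1 n2 by (intro mult_le_one) auto
    have p2: "nA (fst z) * nA (snd z) \<le> 1" using n1 n2 by (intro mult_le_one) auto
    have b1: "cmod (iA (T (snd z)) (fst z)) \<le> CT"
    proof -
      have "cmod (iA (T (snd z)) (fst z)) \<le> nA (T (snd z)) * nA (fst z)" by (rule csA)
      also have "\<dots> \<le> CT * nA (snd z) * nA (fst z)" using CT[of "snd z"] by (intro mult_right_mono) auto
      also have "\<dots> = CT * (nA (snd z) * nA (fst z))" by (simp add: mult.assoc)
      also have "\<dots> \<le> CT * 1" using p1 by (intro mult_left_mono) (auto simp: CT_def)
      finally show ?thesis by simp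
    qed
    have b2: "cmod (\<i> * iA (S (fst z)) (snd z)) \<le> CS"
    proof -
      have "cmod (\<i> * iA (S (fst z)) (snd z)) = cmod (iA (S (fst z)) (snd z))" by (simp add: norm_mult)
      also have "\<dots> \<le> nA (S (fst z)) * nA (snd z)" by (rule csA)
      also have "\<dots> \<le> CS * nA (fst z) * nA (snd z)" using CS[of "fst z"] by (intro mult_right_mono) auto
      also have "\<dots> = CS * (nA (fst z) * nA (snd z))" by (simp add: mult.assoc)
      also have "\<dots> \<le> CS * 1" using p2 by (intro mult_left_mono) (auto simp: CS_def)
      finally show ?thesis by simp
    qed
    have "V z = cmod (iA (T (snd z)) (fst z) + \<i> * iA (S (fst z)) (snd z))" unfolding V_def Mz ..
    also have "\<dots> \<le> cmod (iA (T (snd z)) (fst z)) + cmod (\<i> * iA (S (fst z)) (snd z))"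
      by (rule norm_triangle_ineq)
    finally show "V z \<le> CT + CS" using b1 b2 by linarith
  qed
  have up: "V z \<le> omegaAA ip A M" if "z \<in> U" for z
    unfolding omegaAA_def V_def[symmetric] U_def[symmetric] using that bdd by (rule cSUP_upper)
  have Tsc: "T (sc a x) = sc a (T x)" for a x by (rule bounded_opD(2)[OF Tb])
  have Ssc: "S (sc a x) = sc a (S x)" for a x by (rule bounded_opD(2)[OF Sb])
  define c where "c = complex_of_real (1 / sqrt 2)"
  have cc: "c * cnj c = 1 / 2" unfolding c_def by (simp add: complex_eq_iff)
  have cmc: "cmod c = 1 / sqrt 2" unfolding c_def by (simp add: norm_divide)
  have cmic: "cmod (\<i> * c) = 1 / sqrt 2" unfolding c_def by (simp add: norm_mult norm_divide)
  have inU: "(sc a x, sc b x) \<in> U" if x: "nA x = 1" and a: "cmod a = 1 / sqrt 2" and b: "cmod b = 1 / sqrt 2" for a b x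
  proof -
    have "(nA (sc a x))^2 = 1 / 2" unfolding nA_sc a x by (simp add: power_divide)
    moreover have "(nA (sc b x))^2 = 1 / 2" unfolding nA_sc b x by (simp add: power_divide)
    ultimately show ?thesis unfolding U_def by (simp add: normAA_eq)
  qed
  have kp: "cmod (iA (T x + sc \<i> (S x)) x) \<le> 2 * omegaAA ip A M" if x: "nA x = 1" for x
  proof -
    define a where "a = iA (T x) x"
    define b where "b = iA (S x) x"
    have e: "iA (T x + sc \<i> (S x)) x = a + \<i> * b" unfolding a_def b_def by (simp add: Af.addL Af.scL)
    have "ipAA ip A (M (sc c x, sc c x)) (sc c x, sc c x) = (c * cnj c) * a + \<i> * ((c * cnj c) * b)"
      unfolding Mz a_def b_def by (simp add: Tsc Ssc Af.scL Af.scR mult.assoc)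
    also have "\<dots> = (1/2) * (a + \<i> * b)" unfolding cc by (simp add: algebra_simps)
    finally have eqv: "ipAA ip A (M (sc c x, sc c x)) (sc c x, sc c x) = (1/2) * (a + \<i> * b)" .
    have "V (sc c x, sc c x) = cmod ((1/2) * (a + \<i> * b))" unfolding V_def eqv ..
    also have "\<dots> = (1/2) * cmod (a + \<i> * b)" by (simp add: norm_mult)
    finally have "V (sc c x, sc c x) = (1/2) * cmod (a + \<i> * b)" .
    moreover have "V (sc c x, sc c x) \<le> omegaAA ip A M" using inU[OF x cmc cmc] by (rule up)
    ultimately show ?thesis unfolding e by simp
  qed
  have km: "cmod (iA (T x - sc \<i> (S x)) x) \<le> 2 * omegaAA ip A M" if x: "nA x = 1" for x
  proof -
    define a where "a = iA (T x) x"
    define b where "b = iA (S x) x"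
    have e: "iA (T x - sc \<i> (S x)) x = a - \<i> * b" unfolding a_def b_def by (simp add: Af.diffL Af.scL)
    have "ipAA ip A (M (sc c x, sc (\<i> * c) x)) (sc c x, sc (\<i> * c) x)
          = \<i> * (c * cnj c) * a + (c * cnj c) * b"
      unfolding Mz a_def b_def by (simp add: Tsc Ssc Af.scL Af.scR mult.assoc)
    also have "\<dots> = (\<i> / 2) * (a - \<i> * b)" using cc by (simp add: algebra_simps)
    finally have eqv: "ipAA ip A (M (sc c x, sc (\<i> * c) x)) (sc c x, sc (\<i> * c) x) = (\<i> / 2) * (a - \<i> * b)" .
    have "V (sc c x, sc (\<i> * c) x) = cmod ((\<i> / 2) * (a - \<i> * b))" unfolding V_def eqv ..
    also have "\<dots> = (1/2) * cmod (a - \<i> * b)" by (simp add: norm_mult norm_divide)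
    finally have "V (sc c x, sc (\<i> * c) x) = (1/2) * cmod (a - \<i> * b)" .
    moreover have "V (sc c x, sc (\<i> * c) x) \<le> omegaAA ip A M" using inU[OF x cmc cmic] by (rule up)
    ultimately show ?thesis unfolding e by simp
  qed
  have ne: "{x. nA x = 1} \<noteq> {}" using exists_unit[OF ex] by blast
  have "omegaA ip A (\<lambda>x. T x + sc \<i> (S x)) \<le> 2 * omegaAA ip A M"
    unfolding omegaA_def using ne by (rule cSUP_least) (use kp in blast)
  moreover have "omegaA ip A (\<lambda>x. T x - sc \<i> (S x)) \<le> 2 * omegaAA ip A M"
    unfolding omegaA_def using ne by (rule cSUP_least) (use km in blast)
  ultimately show ?thesis unfolding M_def by blast
qed

end

theorem lemma2p21:
  fixes sc :: "complex \<Rightarrow> 'h::ab_group_add \<Rightarrow> 'h"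
    and ip :: "'h \<Rightarrow> 'h \<Rightarrow> complex"
    and A T S :: "'h \<Rightarrow> 'h"
  assumes "complex_hilbert_space sc ip"
    and "positive_op sc ip A"
    and "\<exists>x. A x \<noteq> 0"
    and "T \<in> BA sc ip A"
    and "S \<in> BA sc ip A"
  shows "omegaA ip A (\<lambda>x. T x + sc \<i> (S x))
           \<le> 2 * omegaAA ip A (opmat (\<lambda>_. 0) T (\<lambda>x. sc \<i> (S x)) (\<lambda>_. 0)) \<and>
         omegaA ip A (\<lambda>x. T x - sc \<i> (S x))
           \<le> 2 * omegaAA ip A (opmat (\<lambda>_. 0) T (\<lambda>x. sc \<i> (S x)) (\<lambda>_. 0))"
proof -
  interpret hsA sc ip A
    by (intro hsA.intro hs.intro hsA_axioms.intro assms(1) assms(2))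
  show ?thesis by (rule main[OF assms(3) assms(4) assms(5)])
qed

end
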